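(* Let $0<\alpha\le\beta$ with $\alpha\le1$, and let $\gamma:[0,1]\to\mathbb{R}^n$ be an $(\alpha,\beta)$-bi-Hölder curve with constant $1\le C_\gamma<\infty$. Then there exist $C=C(\alpha,\beta,C_\gamma,n)>0$ and $r_0=r_0(\beta,C_\gamma)>0$ such that for all $0<r<r_0$, $$\frac1C\, r^{\frac{\beta-1}{\beta}}\le \widehat\Lambda(B(\widehat\gamma,r),r)\le C\, r^{\frac{\alpha-1}{\alpha}}.$$
   Context: A map $\gamma:[0,1]\to\mathbb{R}^n$ is an $(\alpha,\beta)$-bi-Hölder curve with constant $C_\gamma\ge1$ if $\frac1{C_\gamma}|x-y|^\beta\le|\gamma(x)-\gamma(y)|\le C_\gamma|x-y|^\alpha$ for all $x,y\in[0,1]$. $\widehat\gamma:=\gamma([0,1])$. For $A\subset\mathbb{R}^n$, $B(A,r):=\{x:\mathrm{dist}(x,A)\le r\}$. The length of a curve $\sigma:[0,1]\to\mathbb{R}^n$ is $\ell(\sigma):=\sup\sum_{k=1}^N|\sigma(t_k)-\sigma(t_{k-1})|$, the supremum over all partitions $0=t_0<\dots<t_N=1$. For a compact $E$, $\widehat\Lambda(E,r):=\inf\{\ell(\sigma):\sigma:[0,1]\to\mathbb{R}^n \text{ Lipschitz with } B(\sigma([0,1]),r)\supset E\}$. *)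

theory Defs
  imports "HOL-Analysis.Analysis"
begin

definition bi_holder :: "real \<Rightarrow> real \<Rightarrow> real \<Rightarrow> (real \<Rightarrow> 'a::euclidean_space) \<Rightarrow> bool" where
  "bi_holder \<alpha> \<beta> C \<gamma> \<longleftrightarrow> C \<ge> 1 \<and>
     (\<forall>x\<in>{0..1}. \<forall>y\<in>{0..1}.
        (1 / C) * \<bar>x - y\<bar> powr \<beta> \<le> dist (\<gamma> x) (\<gamma> y) \<and>
        dist (\<gamma> x) (\<gamma> y) \<le> C * \<bar>x - y\<bar> powr \<alpha>)"

definition nbhd :: "'a::euclidean_space set \<Rightarrow> real \<Rightarrow> 'a set" where
  "nbhd A r = {x. infdist x A \<le> r}"

definition curve_length :: "(real \<Rightarrow> 'a::euclidean_space) \<Rightarrow> ereal" where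
  "curve_length \<sigma> = (SUP p \<in> {(N, t) | (N :: nat) (t :: nat \<Rightarrow> real).
                                   t 0 = 0 \<and> t N = 1 \<and> (\<forall>k<N. t k < t (Suc k))}.
       ereal (\<Sum>k<fst p. dist (\<sigma> (snd p (Suc k))) (\<sigma> (snd p k))))"

definition Lambda_hat :: "'a::euclidean_space set \<Rightarrow> real \<Rightarrow> ereal" where
  "Lambda_hat E r = (INF \<sigma> \<in> {\<sigma> :: real \<Rightarrow> 'a. (\<exists>L. L-lipschitz_on {0..1} \<sigma>)
                                   \<and> E \<subseteq> nbhd (\<sigma> ` {0..1}) r}. curve_length \<sigma>)"

end

theory Submission
  imports Defs
begin


lemma infdist_lt_ex:
  fixes A :: "'a::metric_space set"
  assumes "infdist x A < d" "A \<noteq> {}"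
  shows "\<exists>a\<in>A. dist x a < d"
proof -
  have "(INF a\<in>A. dist x a) < d" using assms by (simp add: infdist_notempty)
  then show ?thesis
    using assms(2) by (subst (asm) cINF_less_iff) (auto intro: bdd_belowI[of _ 0])
qed

lemma curve_length_ge:
  assumes "t 0 = 0" "t N = 1" "\<forall>k<N. t k < t (Suc k)"
  shows "ereal (\<Sum>k<N. dist (\<sigma> (t (Suc k))) (\<sigma> (t k))) \<le> curve_length \<sigma>"
  unfolding curve_length_def
  by (rule SUP_upper2[where i="(N,t)"]) (use assms in auto)

lemma mono_steps:
  fixes t :: "nat \<Rightarrow> real"
  assumes "\<forall>k<N. t k < t (Suc k)" "i \<le> j" "j \<le> N"
  shows "t i \<le> t j"
  using assms(2,3)
proof (induction j)
  case 0 then show ?case by simp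
next
  case (Suc j)
  show ?case
  proof (cases "i = Suc j")
    case False
    then have "t i \<le> t j" using Suc by simp
    also have "\<dots> \<le> t (Suc j)" using assms(1) Suc.prems by (simp add: less_imp_le)
    finally show ?thesis .
  qed simp
qed

lemma curve_length_le_lip:
  assumes "L-lipschitz_on {0..1} \<sigma>"
  shows "curve_length \<sigma> \<le> ereal L"
  unfolding curve_length_def
proof (rule SUP_least, clarsimp)
  fix N and t :: "nat \<Rightarrow> real"
  assume t0: "t 0 = 0" and tN: "t N = 1" and st: "\<forall>k<N. t k < t (Suc k)"
  have tin: "t k \<in> {0..1}" if "k \<le> N" for k
    using mono_steps[OF st, of 0 k] mono_steps[OF st, of k N] that t0 tN by auto
  have "(\<Sum>k<N. dist (\<sigma> (t (Suc k))) (\<sigma> (t k))) \<le> (\<Sum>k<N. L * (t (Suc k) - t k))"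
  proof (rule sum_mono)
    fix k assume "k \<in> {..<N}"
    then have "dist (\<sigma> (t (Suc k))) (\<sigma> (t k)) \<le> L * dist (t (Suc k)) (t k)"
      using assms tin[of k] tin[of "Suc k"] unfolding lipschitz_on_def by auto
    then show "dist (\<sigma> (t (Suc k))) (\<sigma> (t k)) \<le> L * (t (Suc k) - t k)"
      using st \<open>k \<in> {..<N}\<close> by (auto simp: dist_real_def)
  qed
  also have "\<dots> = L * (t N - t 0)"
    by (simp add: sum_distrib_left[symmetric] sum_lessThan_telescope)
  finally show "(\<Sum>k<N. dist (\<sigma> (t (Suc k))) (\<sigma> (t k))) \<le> L" using t0 tN by simp
qed

definition cl :: "real \<Rightarrow> real" where "cl x = max 0 (min 1 x)"

lemma sum_cl: "(\<Sum>k<m. cl (x - real k)) = max 0 (min (real m) x)"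
  by (induction m) (auto simp: cl_def)

lemma cl_mono: "x \<le> y \<Longrightarrow> cl x \<le> cl y"
  by (auto simp: cl_def)

definition pwl :: "(nat \<Rightarrow> 'a::real_normed_vector) \<Rightarrow> nat \<Rightarrow> real \<Rightarrow> 'a" where
  "pwl P m t = P 0 + (\<Sum>k<m. cl (real m * t - real k) *\<^sub>R (P (Suc k) - P k))"

lemma poly_at:
  assumes "j \<le> m" "m > 0"
  shows "pwl P m (real j / real m) = P j"
proof -
  have "(\<Sum>k<m. cl (real m * (real j / real m) - real k) *\<^sub>R (P (Suc k) - P k))
      = (\<Sum>k<m. (if k < j then P (Suc k) - P k else 0))"
    using assms by (intro sum.cong) (auto simp: cl_def)
  also have "\<dots> = (\<Sum>k<j. P (Suc k) - P k)"
    using assms by (simp add: sum.If_cases lessThan_def Collect_conj_eq[symmetric]) (metis (mono_tags) less_le_trans)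
  also have "\<dots> = P j - P 0" by (simp add: sum_lessThan_telescope)
  finally show ?thesis by (simp add: pwl_def)
qed

lemma poly_lip_aux:
  assumes D: "\<forall>k. norm (P (Suc k) - P k) \<le> D" and "s \<le> t" "s \<in> {0..1}" "t \<in> {0..1}"
  shows "dist (pwl P m t) (pwl P m s) \<le> real m * D * (t - s)"
proof -
  have "dist (pwl P m t) (pwl P m s) =
     norm (\<Sum>k<m. (cl (real m * t - real k) - cl (real m * s - real k)) *\<^sub>R (P (Suc k) - P k))"
    by (simp add: pwl_def dist_norm sum_subtractf[symmetric] scaleR_diff_left)
  also have "\<dots> \<le> (\<Sum>k<m. norm ((cl (real m * t - real k) - cl (real m * s - real k)) *\<^sub>R (P (Suc k) - P k)))"
    by (rule norm_sum)
  also have "\<dots> \<le> (\<Sum>k<m. (cl (real m * t - real k) - cl (real m * s - real k)) * D)"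
  proof (rule sum_mono)
    fix k
    have ge: "cl (real m * t - real k) - cl (real m * s - real k) \<ge> 0"
      using cl_mono[of "real m * s - real k" "real m * t - real k"] assms(2)
      by (simp add: mult_left_mono)
    show "norm ((cl (real m * t - real k) - cl (real m * s - real k)) *\<^sub>R (P (Suc k) - P k))
       \<le> (cl (real m * t - real k) - cl (real m * s - real k)) * D"
      using ge D by (simp add: mult_left_mono)
  qed
  also have "\<dots> = ((\<Sum>k<m. cl (real m * t - real k)) - (\<Sum>k<m. cl (real m * s - real k))) * D"
    by (simp add: sum_subtractf[symmetric] sum_distrib_right left_diff_distrib)
  also have "\<dots> = (real m * t - real m * s) * D"
    using assms(3,4) by (simp add: sum_cl mult_left_le)
  finally show ?thesis by (simp add: algebra_simps)
qed

lemma poly_lip: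
  assumes D: "\<forall>k. norm (P (Suc k) - P k) \<le> D" "D \<ge> 0"
  shows "(real m * D)-lipschitz_on {0..1} (pwl P m)"
  unfolding lipschitz_on_def
proof (intro conjI ballI)
  show "0 \<le> real m * D" using assms by simp
  fix x y :: real assume "x \<in> {0..1}" "y \<in> {0..1}"
  then show "dist (pwl P m x) (pwl P m y) \<le> real m * D * dist x y"
    using poly_lip_aux[OF D(1), of x y m] poly_lip_aux[OF D(1), of y x m]
    by (cases "y \<le> x") (auto simp: dist_real_def dist_commute)
qed



lemma net_exists:
  "\<exists>es R. es \<noteq> [] \<and> R \<ge> 0 \<and> (\<forall>e\<in>set es. norm e \<le> R) \<and>
      (\<forall>x::'a::euclidean_space. norm x \<le> 3 \<longrightarrow> (\<exists>e\<in>set es. dist x e \<le> 1))"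
proof -
  have "compact (cball (0::'a) 3)" by simp
  moreover have "cball (0::'a) 3 \<subseteq> (\<Union>c\<in>cball 0 3. ball c 1)" by force
  ultimately obtain C' where C': "C' \<subseteq> cball 0 3" "finite C'" "cball (0::'a) 3 \<subseteq> (\<Union>c\<in>C'. ball c 1)"
    using compactE_image[of "cball (0::'a) 3" "cball 0 3" "\<lambda>c. ball c 1"] by auto
  obtain es where es: "set es = C'" using C'(2) finite_list by blast
  have ne: "es \<noteq> []"
  proof
    assume "es = []"
    then have "C' = {}" using es by simp
    then show False using C'(3) by (metis UN_empty centre_in_cball empty_iff subsetD zero_le_numeral)
  qed
  show ?thesis
  proof (intro exI conjI)
    show "es \<noteq> []" by fact
    show "(3::real) \<ge> 0" by simp
    show "\<forall>e\<in>set es. norm e \<le> 3" using C'(1) es by auto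
    show "\<forall>x::'a. norm x \<le> 3 \<longrightarrow> (\<exists>e\<in>set es. dist x e \<le> 1)"
    proof (intro allI impI)
      fix x :: 'a assume "norm x \<le> 3"
      then have "x \<in> cball 0 3" by simp
      then obtain c where "c \<in> C'" "x \<in> ball c 1" using C'(3) by blast
      then show "\<exists>e\<in>set es. dist x e \<le> 1" using es by (metis mem_ball less_imp_le dist_commute)
    qed
  qed
qed

lemma holder_close:
  fixes \<gamma> :: "real \<Rightarrow> 'a::euclidean_space"
  assumes bh: "bi_holder \<alpha> \<beta> Cg \<gamma>" and a: "0 < \<alpha>" and r: "0 < r"
    and N: "real N \<ge> (Cg / r) powr (1/\<alpha>)" "N > 0"
    and uv: "u \<in> {0..1}" "v \<in> {0..1}" "\<bar>u - v\<bar> \<le> 1 / real N"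
  shows "dist (\<gamma> u) (\<gamma> v) \<le> r"
proof -
  have Cg: "Cg \<ge> 1" using bh by (simp add: bi_holder_def)
  have "dist (\<gamma> u) (\<gamma> v) \<le> Cg * \<bar>u - v\<bar> powr \<alpha>" using bh uv by (simp add: bi_holder_def)
  also have "\<dots> \<le> Cg * (1 / real N) powr \<alpha>"
    using uv a Cg by (intro mult_left_mono powr_mono2) auto
  also have "(1 / real N) powr \<alpha> = 1 / (real N powr \<alpha>)"
    by (simp add: powr_divide)
  also have "real N powr \<alpha> \<ge> ((Cg / r) powr (1/\<alpha>)) powr \<alpha>"
    using N a by (intro powr_mono2) auto
  then have "real N powr \<alpha> \<ge> Cg / r"
    using a Cg r by (simp add: powr_powr)
  then have "Cg * (1 / real N powr \<alpha>) \<le> r"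
    using Cg r N by (simp add: field_simps)
  finally show ?thesis by simp
qed

lemma upper_bound:
  fixes \<gamma> :: "real \<Rightarrow> 'a::euclidean_space" and es :: "'a list"
  assumes bh: "bi_holder \<alpha> \<beta> Cg \<gamma>" and a: "0 < \<alpha>" "\<alpha> \<le> 1" and r: "0 < r" "r \<le> Cg"
    and es: "es \<noteq> []" "R \<ge> 0" "\<forall>e\<in>set es. norm e \<le> R"
      "\<forall>x::'a. norm x \<le> 3 \<longrightarrow> (\<exists>e\<in>set es. dist x e \<le> 1)"
  shows "Lambda_hat (nbhd (\<gamma> ` {0..1}) r) r
     \<le> ereal (3 * real (length es) * (1 + 2 * R) * Cg powr (1/\<alpha>) * r powr (1 - 1/\<alpha>))"
proof -
  have Cg: "Cg \<ge> 1" using bh by (simp add: bi_holder_def)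
  define x where "x = (Cg / r) powr (1/\<alpha>)"
  have x1: "x \<ge> 1" unfolding x_def using r a by (intro ge_one_powr_ge_zero) auto
  define N where "N = nat \<lceil>x\<rceil>"
  have Nx: "real N \<ge> x" "real N \<le> x + 1" using x1 by (auto simp: N_def)
  have N0: "N > 0" using Nx x1 by simp
  define M where "M = length es"
  have M0: "M > 0" using es M_def by simp
  define c where "c i = \<gamma> (real (min i N) / real N)" for i
  define P where "P n = c (n div M) + r *\<^sub>R es ! (n mod M)" for n
  define m where "m = (N + 1) * M"
  define D where "D = r * (1 + 2 * R)"
  have close: "dist (\<gamma> u) (\<gamma> v) \<le> r" if "u \<in> {0..1}" "v \<in> {0..1}" "\<bar>u - v\<bar> \<le> 1 / real N" for u v
    using holder_close[OF bh a(1) r(1) _ N0 that] Nx x_def by simp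
  have esR: "norm (es ! (n mod M)) \<le> R" for n
    using es(3) M0 M_def by simp
  have cstep: "dist (c (Suc n div M)) (c (n div M)) \<le> r" for n
  proof -
    have "Suc n div M = n div M \<or> Suc n div M = Suc (n div M)"
      using M0 by (metis div_Suc)
    then have "\<bar>real (min (Suc n div M) N) / real N - real (min (n div M) N) / real N\<bar> \<le> 1 / real N"
      using N0 by (auto simp: field_simps min_def)
    then show ?thesis unfolding c_def using N0
      by (intro close) (auto simp: field_simps)
  qed
  have step: "norm (P (Suc k) - P k) \<le> D" for k
  proof -
    have "norm (P (Suc k) - P k) \<le> norm (c (Suc k div M) - c (k div M)) + norm (r *\<^sub>R (es ! (Suc k mod M) - es ! (k mod M)))"
      unfolding P_def by (rule order_trans[OF _ norm_triangle_ineq]) (simp add: algebra_simps)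
    also have "\<dots> \<le> r + r * (R + R)"
      using cstep[of k] esR[of k] esR[of "Suc k"] r
      by (intro add_mono) (auto simp: dist_norm intro!: mult_left_mono order_trans[OF norm_triangle_ineq4])
    finally show ?thesis by (simp add: D_def algebra_simps)
  qed
  define \<sigma> where "\<sigma> = pwl P m"
  have D0: "D \<ge> 0" using r es by (simp add: D_def)
  have lip: "(real m * D)-lipschitz_on {0..1} \<sigma>"
    unfolding \<sigma>_def by (rule poly_lip) (use step D0 in auto)
  have m0: "m > 0" using M0 by (simp add: m_def)
  have cover: "nbhd (\<gamma> ` {0..1}) r \<subseteq> nbhd (\<sigma> ` {0..1}) r"
  proof
    fix y assume "y \<in> nbhd (\<gamma> ` {0..1}) r"
    then have "infdist y (\<gamma> ` {0..1}) < 2 * r" using r by (simp add: nbhd_def)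
    then obtain t where t: "t \<in> {0..1}" "dist y (\<gamma> t) < 2 * r"
      using infdist_lt_ex[of y "\<gamma> ` {0..1}" "2*r"] by auto
    define i where "i = nat \<lfloor>t * real N\<rfloor>"
    have i1: "real i \<le> t * real N" "t * real N < real i + 1" using t N0 by (auto simp: i_def)
    have "t * real N \<le> real N" using t by (simp add: mult_left_le_one_le)
    then have "real i \<le> real N" using i1 by linarith
    then have iN: "i \<le> N" by simp
    have "\<bar>t * real N - real i\<bar> \<le> 1" using i1 by linarith
    moreover have "t - real i / real N = (t * real N - real i) / real N" using N0 by (simp add: field_simps)
    ultimately have "\<bar>t - real i / real N\<bar> \<le> 1 / real N" using N0
      by (simp add: divide_right_mono)
    moreover have "real i / real N \<in> {0..1}" using iN N0 by auto
    ultimately have "dist (\<gamma> t) (c i) \<le> r" unfolding c_def using iN t by (simp add: close min_def)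
    then have yc: "dist y (c i) \<le> 3 * r" using t dist_triangle[of y "c i" "\<gamma> t"] by simp
    have "norm ((1/r) *\<^sub>R (y - c i)) = norm (y - c i) / r" using r by simp
    also have "\<dots> \<le> 3" using yc r by (simp add: dist_norm divide_le_eq)
    finally have "norm ((1/r) *\<^sub>R (y - c i)) \<le> 3" .
    then obtain e where e: "e \<in> set es" "dist ((1/r) *\<^sub>R (y - c i)) e \<le> 1" using es(4) by blast
    then obtain j where j: "j < M" "es ! j = e" by (auto simp: in_set_conv_nth M_def)
    define n where "n = i * M + j"
    have "i * M + j < (i + 1) * M" using j by simp
    also have "\<dots> \<le> (N + 1) * M" using iN by (intro mult_le_mono1) simp
    finally have nm: "n \<le> m" by (simp add: n_def m_def)
    have "n div M = i" "n mod M = j" using j by (auto simp: n_def)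
    then have Pn: "P n = c i + r *\<^sub>R e" using j by (simp add: P_def)
    have "dist y (P n) = r * dist ((1/r) *\<^sub>R (y - c i)) e"
    proof -
      have "y - P n = r *\<^sub>R ((1/r) *\<^sub>R (y - c i) - e)" using r by (simp add: Pn algebra_simps)
      then show ?thesis using r by (simp add: dist_norm)
    qed
    also have "\<dots> \<le> r" using e r by simp
    finally have "dist y (P n) \<le> r" .
    moreover have "P n \<in> \<sigma> ` {0..1}"
      using poly_at[OF nm m0, of P] nm m0 unfolding \<sigma>_def
      by (intro image_eqI[where x="real n / real m"]) auto
    ultimately show "y \<in> nbhd (\<sigma> ` {0..1}) r" by (auto simp: nbhd_def intro: infdist_le2)
  qed
  have "Lambda_hat (nbhd (\<gamma> ` {0..1}) r) r \<le> curve_length \<sigma>"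
    unfolding Lambda_hat_def using lip cover by (intro INF_lower) auto
  also have "\<dots> \<le> ereal (real m * D)" by (rule curve_length_le_lip[OF lip])
  also have "real m * D \<le> 3 * real M * (1 + 2 * R) * Cg powr (1/\<alpha>) * r powr (1 - 1/\<alpha>)"
  proof -
    have "real N + 1 \<le> 3 * x" using Nx x1 by simp
    then have "(real N + 1) * (real M * (r * (1 + 2*R))) \<le> (3 * x) * (real M * (r * (1 + 2*R)))"
      using r es(2) by (intro mult_right_mono) auto
    then have "real m * D \<le> 3 * x * real M * r * (1 + 2*R)"
      by (simp add: m_def D_def algebra_simps)
    also have "3 * x * real M * r * (1 + 2*R) = 3 * real M * (1 + 2*R) * (x * r)"
      by (simp add: algebra_simps)
    also have "x * r = Cg powr (1/\<alpha>) * r powr (1 - 1/\<alpha>)"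
      using r Cg by (simp add: x_def powr_divide powr_diff)
    finally show ?thesis by (simp add: mult.assoc)
  qed
  finally show ?thesis by (simp add: M_def)
qed



lemma lower_bound:
  fixes \<gamma> :: "real \<Rightarrow> 'a::euclidean_space"
  assumes bh: "bi_holder \<alpha> \<beta> Cg \<gamma>" and b: "0 < \<beta>" and r: "0 < r"
    and x6: "(4 * Cg * r) powr (-1/\<beta>) \<ge> 6"
  shows "ereal ((1/2) * (4 * Cg) powr (-1/\<beta>) * r powr (1 - 1/\<beta>)) \<le> Lambda_hat (nbhd (\<gamma> ` {0..1}) r) r"
  unfolding Lambda_hat_def
proof (rule INF_greatest, clarify)
  fix \<sigma> :: "real \<Rightarrow> 'a" and L
  assume cov: "nbhd (\<gamma> ` {0..1}) r \<subseteq> nbhd (\<sigma> ` {0..1}) r"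
  have Cg: "Cg \<ge> 1" using bh by (simp add: bi_holder_def)
  define x where "x = (4 * Cg * r) powr (-1/\<beta>)"
  have x6': "x \<ge> 6" using x6 by (simp add: x_def)
  define N where "N = nat \<lfloor>x\<rfloor>"
  have Nx: "real N \<le> x" "x < real N + 1" using x6' by (auto simp: N_def)
  have "real N > 5" using x6' Nx by linarith
  then have N6': "N \<ge> 6" by simp
  then have N6: "real N \<ge> 6" by simp
  then have N0: "N > 0" by simp
  define p where "p i = \<gamma> (real i / real N)" for i
  have sep: "dist (p i) (p j) \<ge> 4 * r" if "i \<le> N" "j \<le> N" "i \<noteq> j" for i j
  proof -
    have ij: "\<bar>real i / real N - real j / real N\<bar> \<ge> 1 / real N"
    proof -
      have "\<bar>real i - real j\<bar> \<ge> 1" using that by (cases "i < j") auto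
      moreover have "real i / real N - real j / real N = (real i - real j) / real N" by (simp add: diff_divide_distrib)
      ultimately show ?thesis using N0 by (simp add: divide_right_mono)
    qed
    have in01: "real i / real N \<in> {0..1}" "real j / real N \<in> {0..1}" using that N0 by auto
    have "(1/Cg) * (1 / real N) powr \<beta> \<le> (1/Cg) * \<bar>real i / real N - real j / real N\<bar> powr \<beta>"
      using ij b Cg N0 by (intro mult_left_mono powr_mono2) auto
    also have "\<dots> \<le> dist (p i) (p j)" using bh in01 by (simp add: bi_holder_def p_def)
    finally have A: "(1/Cg) * (1 / real N) powr \<beta> \<le> dist (p i) (p j)" .
    have "x powr \<beta> = 1 / (4 * Cg * r)"
    proof -
      have "x powr \<beta> = (4 * Cg * r) powr (-1/\<beta> * \<beta>)" by (simp add: x_def powr_powr)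
      also have "-1/\<beta> * \<beta> = -1" using b by simp
      finally show ?thesis using Cg r by (simp add: powr_minus_divide)
    qed
    moreover have "real N powr \<beta> \<le> x powr \<beta>" using Nx b N0 by (intro powr_mono2) auto
    ultimately have "real N powr \<beta> \<le> 1 / (4 * Cg * r)" by simp
    then have "4 * Cg * r \<le> 1 / real N powr \<beta>" using Cg r N0
      by (simp add: field_simps)
    moreover have "real N powr \<beta> > 0" using N0 by simp
    ultimately have "4 * r \<le> (1/Cg) * (1 / real N) powr \<beta>" using Cg
      by (simp add: powr_divide field_simps)
    then show ?thesis using A by simp
  qed
  have ne: "\<sigma> ` {0..1} \<noteq> {}" by auto
  have "\<forall>i\<in>{..N}. \<exists>s. s \<in> {0..1} \<and> dist (p i) (\<sigma> s) < 3/2 * r"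
  proof (intro ballI)
    fix i assume "i \<in> {..N}"
    then have "i \<le> N" by simp
    then have "p i \<in> nbhd (\<gamma> ` {0..1}) r" using N0 r by (auto simp: p_def nbhd_def)
    then have "infdist (p i) (\<sigma> ` {0..1}) < 3/2 * r" using cov r by (auto simp: nbhd_def)
    then obtain q where "q \<in> \<sigma> ` {0..1}" "dist (p i) q < 3/2 * r" using infdist_lt_ex[OF _ ne] by blast
    then show "\<exists>s. s \<in> {0..1} \<and> dist (p i) (\<sigma> s) < 3/2 * r" by auto
  qed
  then obtain s where s0: "\<forall>i\<in>{..N}. s i \<in> {0..1} \<and> dist (p i) (\<sigma> (s i)) < 3/2 * r"
    by (rule bchoice[elim_format]) blast
  then have s: "\<And>i. i \<le> N \<Longrightarrow> s i \<in> {0..1} \<and> dist (p i) (\<sigma> (s i)) < 3/2 * r" by auto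
  have qsep: "dist (\<sigma> (s i)) (\<sigma> (s j)) \<ge> r" if "i \<le> N" "j \<le> N" "i \<noteq> j" for i j
  proof -
    have "dist (p i) (p j) \<le> dist (p i) (\<sigma> (s i)) + dist (\<sigma> (s i)) (\<sigma> (s j)) + dist (\<sigma> (s j)) (p j)"
      by (metis dist_triangle add.commute add_left_mono order_trans dist_commute)
    then show ?thesis using sep[OF that] s[OF that(1)] s[OF that(2)] by (simp add: dist_commute)
  qed
  define T where "T = s ` {0..N}"
  define U where "U = T \<union> {0, 1}"
  have inj: "inj_on s {0..N}"
  proof (rule inj_onI)
    fix i j assume "i \<in> {0..N}" "j \<in> {0..N}" "s i = s j"
    then show "i = j" using qsep[of i j] r by (cases "i = j") auto
  qed
  have cardT: "card T = N + 1" using inj by (simp add: T_def card_image)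
  have finU: "finite U" by (simp add: U_def T_def)
  have U01: "U \<subseteq> {0..1}" using s by (auto simp: U_def T_def)
  have cardU: "card U \<ge> N + 1" using cardT finU by (metis U_def card_mono sup_ge1)
  define l where "l = sorted_list_of_set U"
  have sl: "sorted_wrt (<) l" by (simp add: l_def strict_sorted_list_of_set)
  have sl2: "sorted l" by (simp add: l_def)
  have setl: "set l = U" using finU by (simp add: l_def)
  have lenl: "length l = card U" by (simp add: l_def)
  define m where "m = length l - 1"
  have mN: "m \<ge> N" using cardU lenl by (simp add: m_def)
  have lm: "length l = Suc m" using lenl cardU by (simp add: m_def)
  have lin: "l ! k \<in> {0..1}" if "k \<le> m" for k using that lm setl U01 nth_mem[of k l] by auto
  have l0: "l ! 0 = 0"
  proof -
    have "0 \<in> set l" using setl by (simp add: U_def)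
    then obtain j where "j < length l" "l ! j = 0" by (auto simp: in_set_conv_nth)
    then have "l ! 0 \<le> 0" using sorted_nth_mono[OF sl2, of 0 j] by simp
    then show ?thesis using lin[of 0] by simp
  qed
  have lm1: "l ! m = 1"
  proof -
    have "1 \<in> set l" using setl by (simp add: U_def)
    then obtain j where "j < length l" "l ! j = 1" by (auto simp: in_set_conv_nth)
    then have "l ! m \<ge> 1" using sorted_nth_mono[OF sl2, of j m] lm by simp
    then show ?thesis using lin[of m] by simp
  qed
  have strict: "l ! i < l ! j" if "i < j" "j \<le> m" for i j
    using sorted_wrt_nth_less[OF sl that(1)] that lm by simp
  have "ereal (\<Sum>k<m. dist (\<sigma> (l ! Suc k)) (\<sigma> (l ! k))) \<le> curve_length \<sigma>"
    by (rule curve_length_ge[where t="\<lambda>k. l ! k"]) (use l0 lm1 strict in auto)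
  moreover have "(\<Sum>k<m. dist (\<sigma> (l ! Suc k)) (\<sigma> (l ! k))) \<ge> real (m - 2) * r"
  proof -
    have "real (m - 2) * r = (\<Sum>k\<in>{1..<m-1}. r)" by (simp add: numeral_2_eq_2)
    also have "\<dots> \<le> (\<Sum>k\<in>{1..<m-1}. dist (\<sigma> (l ! Suc k)) (\<sigma> (l ! k)))"
    proof (rule sum_mono)
      fix k assume k: "k \<in> {1..<m-1}"
      have inT: "l ! i \<in> T" if "1 \<le> i" "i < m" for i
      proof -
        have "l ! i \<in> U" using setl lm that by (metis less_SucI nth_mem)
        moreover have "l ! i \<noteq> 0" using strict[of 0 i] that l0 by simp
        moreover have "l ! i \<noteq> 1" using strict[of i m] that lm1 by simp
        ultimately show ?thesis by (simp add: U_def)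
      qed
      have k1: "1 \<le> k" "Suc k < m" using k by auto
      have "l ! Suc k \<in> T" using inT[of "Suc k"] k1 by simp
      then obtain i where i: "i \<le> N" "l ! Suc k = s i" by (auto simp: T_def)
      have "l ! k \<in> T" using inT[of k] k1 by simp
      then obtain j where j: "j \<le> N" "l ! k = s j" by (auto simp: T_def)
      have "l ! k < l ! Suc k" using strict[of k "Suc k"] k1 by simp
      then have "i \<noteq> j" using i j by auto
      then show "r \<le> dist (\<sigma> (l ! Suc k)) (\<sigma> (l ! k))" using qsep i j by simp
    qed
    also have "\<dots> \<le> (\<Sum>k<m. dist (\<sigma> (l ! Suc k)) (\<sigma> (l ! k)))"
      by (rule sum_mono2) auto
    finally show ?thesis .
  qed
  moreover have "(1/2) * (4 * Cg) powr (-1/\<beta>) * r powr (1 - 1/\<beta>) \<le> real (m - 2) * r"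
  proof -
    have "x * r = (4 * Cg) powr (-1/\<beta>) * r powr (1 - 1/\<beta>)"
      using Cg r by (simp add: x_def powr_mult powr_diff powr_minus_divide)
    moreover have "x / 2 \<le> real (m - 2)"
    proof -
      have "real (m - 2) = real m - 2" using mN N6' by (simp add: of_nat_diff)
      moreover have "real m \<ge> real N" using mN by simp
      ultimately show ?thesis using Nx x6' N6 by linarith
    qed
    ultimately have "(x / 2) * r \<le> real (m - 2) * r" using r by (intro mult_right_mono) auto
    moreover have "(x / 2) * r = (1/2) * (x * r)" by simp
    ultimately show ?thesis using \<open>x * r = _\<close> by simp
  qed
  ultimately have "(1/2) * (4 * Cg) powr (-1/\<beta>) * r powr (1 - 1/\<beta>) \<le> (\<Sum>k<m. dist (\<sigma> (l ! Suc k)) (\<sigma> (l ! k)))"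
    by linarith
  then have "ereal ((1/2) * (4 * Cg) powr (-1/\<beta>) * r powr (1 - 1/\<beta>)) \<le> ereal (\<Sum>k<m. dist (\<sigma> (l ! Suc k)) (\<sigma> (l ! k)))"
    by (simp only: ereal_less_eq(3))
  also note \<open>ereal (\<Sum>k<m. dist (\<sigma> (l ! Suc k)) (\<sigma> (l ! k))) \<le> curve_length \<sigma>\<close>
  finally show "ereal ((1/2) * (4 * Cg) powr (-1/\<beta>) * r powr (1 - 1/\<beta>)) \<le> curve_length \<sigma>" .
qed



theorem corollary3p8:
  "\<forall>\<beta> C\<^sub>\<gamma>. \<exists>r0>0. \<forall>\<alpha>. 0 < \<alpha> \<and> \<alpha> \<le> \<beta> \<and> \<alpha> \<le> 1 \<and> 1 \<le> C\<^sub>\<gamma> \<longrightarrow>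
     (\<exists>C>0. \<forall>\<gamma> :: real \<Rightarrow> 'a::euclidean_space. bi_holder \<alpha> \<beta> C\<^sub>\<gamma> \<gamma> \<longrightarrow>
        (\<forall>r. 0 < r \<and> r < r0 \<longrightarrow>
           ereal ((1 / C) * r powr ((\<beta> - 1) / \<beta>)) \<le> Lambda_hat (nbhd (\<gamma> ` {0..1}) r) r \<and>
           Lambda_hat (nbhd (\<gamma> ` {0..1}) r) r \<le> ereal (C * r powr ((\<alpha> - 1) / \<alpha>))))"
proof (intro allI)
  fix \<beta> Cg :: real
  obtain es :: "'a list" and R where es: "es \<noteq> []" "R \<ge> 0" "\<forall>e\<in>set es. norm e \<le> R"
      "\<forall>x::'a. norm x \<le> 3 \<longrightarrow> (\<exists>e\<in>set es. dist x e \<le> 1)"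
    using net_exists[where 'a='a] by blast
  define r0 where "r0 = (if 0 < \<beta> \<and> 0 < Cg then min 1 (6 powr (-\<beta>) / (4 * Cg)) else 1)"
  have r0: "r0 > 0" by (simp add: r0_def)
  show "\<exists>r0>0. \<forall>\<alpha>. 0 < \<alpha> \<and> \<alpha> \<le> \<beta> \<and> \<alpha> \<le> 1 \<and> 1 \<le> Cg \<longrightarrow>
     (\<exists>C>0. \<forall>\<gamma> :: real \<Rightarrow> 'a. bi_holder \<alpha> \<beta> Cg \<gamma> \<longrightarrow>
        (\<forall>r. 0 < r \<and> r < r0 \<longrightarrow>
           ereal ((1 / C) * r powr ((\<beta> - 1) / \<beta>)) \<le> Lambda_hat (nbhd (\<gamma> ` {0..1}) r) r \<and>
           Lambda_hat (nbhd (\<gamma> ` {0..1}) r) r \<le> ereal (C * r powr ((\<alpha> - 1) / \<alpha>))))"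
  proof (rule exI[of _ r0], intro conjI r0 allI impI)
    fix \<alpha> assume h: "0 < \<alpha> \<and> \<alpha> \<le> \<beta> \<and> \<alpha> \<le> 1 \<and> 1 \<le> Cg"
    then have a: "0 < \<alpha>" "\<alpha> \<le> 1" and b: "0 < \<beta>" and Cg: "1 \<le> Cg" by auto
    have r0': "r0 = min 1 (6 powr (-\<beta>) / (4 * Cg))" using b Cg by (simp add: r0_def)
    define A where "A = 3 * real (length es) * (1 + 2 * R) * Cg powr (1/\<alpha>)"
    define B where "B = (1/2) * (4 * Cg) powr (-1/\<beta>)"
    have B0: "B > 0" using Cg by (simp add: B_def)
    define C where "C = max A (1 / B)"
    have C0: "C > 0" using B0 by (simp add: C_def less_max_iff_disj)
    have main: "ereal ((1 / C) * r powr ((\<beta> - 1) / \<beta>)) \<le> Lambda_hat (nbhd (\<gamma> ` {0..1}) r) r \<and>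
           Lambda_hat (nbhd (\<gamma> ` {0..1}) r) r \<le> ereal (C * r powr ((\<alpha> - 1) / \<alpha>))"
      if bh: "bi_holder \<alpha> \<beta> Cg \<gamma>" and rr: "0 < r \<and> r < r0" for \<gamma> :: "real \<Rightarrow> 'a" and r
    proof
      have r: "0 < r" "r < 1" "r < 6 powr (-\<beta>) / (4 * Cg)" using rr r0' by auto
      have ea: "(\<alpha> - 1) / \<alpha> = 1 - 1/\<alpha>" using a by (simp add: field_simps)
      have eb: "(\<beta> - 1) / \<beta> = 1 - 1/\<beta>" using b by (simp add: field_simps)
      have "Lambda_hat (nbhd (\<gamma> ` {0..1}) r) r \<le> ereal (A * r powr (1 - 1/\<alpha>))"
        using upper_bound[OF bh a(1) a(2) r(1) _ es] r Cg by (simp add: A_def)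
      also have "A * r powr (1 - 1/\<alpha>) \<le> C * r powr (1 - 1/\<alpha>)"
        by (intro mult_right_mono) (auto simp: C_def)
      finally show "Lambda_hat (nbhd (\<gamma> ` {0..1}) r) r \<le> ereal (C * r powr ((\<alpha> - 1) / \<alpha>))"
        by (simp add: ea)
      have "r * (4 * Cg) < 6 powr (-\<beta>)" using r(3) Cg by (simp add: pos_less_divide_eq)
      then have "4 * Cg * r \<le> 6 powr (-\<beta>)" by (simp add: mult.commute)
      then have "(6 powr (-\<beta>)) powr (-1/\<beta>) \<le> (4 * Cg * r) powr (-1/\<beta>)"
        using b Cg r by (intro powr_mono2') auto
      moreover have "(6 powr (-\<beta>)) powr (-1/\<beta>) = (6::real)"
        using b by (simp add: powr_powr)
      ultimately have x6: "(4 * Cg * r) powr (-1/\<beta>) \<ge> 6" by simp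
      have "1 / B \<le> C" by (simp add: C_def)
      then have "1 / C \<le> 1 / (1 / B)" using B0 C0 by (intro divide_left_mono) auto
      then have "1 / C \<le> B" by simp
      then have "(1 / C) * r powr (1 - 1/\<beta>) \<le> B * r powr (1 - 1/\<beta>)"
        by (intro mult_right_mono) auto
      then have "ereal ((1 / C) * r powr ((\<beta> - 1) / \<beta>)) \<le> ereal (B * r powr (1 - 1/\<beta>))"
        by (simp add: eb)
      also have "ereal (B * r powr (1 - 1/\<beta>)) \<le> Lambda_hat (nbhd (\<gamma> ` {0..1}) r) r"
        using lower_bound[OF bh b r(1) x6] by (simp add: B_def)
      finally show "ereal ((1 / C) * r powr ((\<beta> - 1) / \<beta>)) \<le> Lambda_hat (nbhd (\<gamma> ` {0..1}) r) r" .
    qed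
    then show "\<exists>C>0. \<forall>\<gamma> :: real \<Rightarrow> 'a. bi_holder \<alpha> \<beta> Cg \<gamma> \<longrightarrow>
        (\<forall>r. 0 < r \<and> r < r0 \<longrightarrow>
           ereal ((1 / C) * r powr ((\<beta> - 1) / \<beta>)) \<le> Lambda_hat (nbhd (\<gamma> ` {0..1}) r) r \<and>
           Lambda_hat (nbhd (\<gamma> ` {0..1}) r) r \<le> ereal (C * r powr ((\<alpha> - 1) / \<alpha>)))"
      using C0 by blast
  qed
qed


end
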